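(* Let $(A,\mathfrak m)$ be a local ring, $B$ a ring, $f : A \to B$ a ring homomorphism and $J$ a proper ideal of $B$ with $J \subseteq \mathrm{Rad}(B)$. Assume that $J \subseteq f(A)$ and $f(\mathrm{Reg}(A)) = \mathrm{Reg}(B)$. Then $A \bowtie^f J$ is a Prüfer ring if and only if $A$ is a Prüfer ring and $J = f(a)J$ for all $a \in \mathfrak m \setminus Z(A)$.
   Context: All rings are commutative with identity. For a ring homomorphism $f:A\to B$ and an ideal $J$ of $B$, $A \bowtie^f J := \{(a, f(a)+j) : a \in A, j \in J\}$, a subring of $A\times B$. $Z(R)$ is the set of zero-divisors of $R$, $\mathrm{Reg}(R)=R\setminus Z(R)$ the set of regular elements, and $\mathrm{Rad}(B)$ the Jacobson radical of $B$. An ideal is regular if it contains a regular element. A ring $R$ is a Prüfer ring if every finitely generated regular ideal of $R$ is invertible. *)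

theory Defs
  imports "HOL-Algebra.Algebra"
begin

definition zero_divisors :: "('a, 'b) ring_scheme \<Rightarrow> 'a set" where
  "zero_divisors R = {a \<in> carrier R. \<exists>b \<in> carrier R. b \<noteq> \<zero>\<^bsub>R\<^esub> \<and> a \<otimes>\<^bsub>R\<^esub> b = \<zero>\<^bsub>R\<^esub>}"

definition regular_elems :: "('a, 'b) ring_scheme \<Rightarrow> 'a set" where
  "regular_elems R = carrier R - zero_divisors R"

definition jacobson_rad :: "('a, 'b) ring_scheme \<Rightarrow> 'a set" where
  "jacobson_rad R = carrier R \<inter> \<Inter> {M. maximalideal M R}"

definition local_ring :: "('a, 'b) ring_scheme \<Rightarrow> bool" where
  "local_ring R \<longleftrightarrow> cring R \<and> (\<exists>!M. maximalideal M R)"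

definition regular_ideal :: "('a, 'b) ring_scheme \<Rightarrow> 'a set \<Rightarrow> bool" where
  "regular_ideal R I \<longleftrightarrow> ideal I R \<and> I \<inter> regular_elems R \<noteq> {}"

definition fin_gen_ideal :: "('a, 'b) ring_scheme \<Rightarrow> 'a set \<Rightarrow> bool" where
  "fin_gen_ideal R I \<longleftrightarrow> ideal I R \<and> (\<exists>S. finite S \<and> S \<subseteq> carrier R \<and> I = genideal R S)"

text \<open>Invertible ideal: I I^{-1} = R with I^{-1} a fractional ideal in the total ring of
  quotients; written with a common regular denominator s, I^{-1} = s^{-1} J,
  this says I J = s R for an ideal J of R and a regular element s.\<close>
definition invertible_ideal :: "('a, 'b) ring_scheme \<Rightarrow> 'a set \<Rightarrow> bool" where
  "invertible_ideal R I \<longleftrightarrow> ideal I R \<and>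
     (\<exists>J s. ideal J R \<and> s \<in> regular_elems R \<and> ideal_prod R I J = cgenideal R s)"

definition pruefer_ring :: "('a, 'b) ring_scheme \<Rightarrow> bool" where
  "pruefer_ring R \<longleftrightarrow> (\<forall>I. fin_gen_ideal R I \<and> regular_ideal R I \<longrightarrow> invertible_ideal R I)"

definition amalg :: "('a, 'c) ring_scheme \<Rightarrow> ('b, 'd) ring_scheme \<Rightarrow> ('a \<Rightarrow> 'b) \<Rightarrow> 'b set
    \<Rightarrow> ('a \<times> 'b) ring" where
  "amalg A B f J = (RDirProd A B)\<lparr>carrier :=
      {(a, f a \<oplus>\<^bsub>B\<^esub> j) | a j. a \<in> carrier A \<and> j \<in> J}\<rparr>"

end

theory Submission imports Defs begin

lemma (in cring) ideal_test:
  assumes "I \<subseteq> carrier R" "\<zero> \<in> I" "\<And>a b. a \<in> I \<Longrightarrow> b \<in> I \<Longrightarrow> a \<oplus> b \<in> I"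
    "\<And>a x. a \<in> I \<Longrightarrow> x \<in> carrier R \<Longrightarrow> x \<otimes> a \<in> I"
  shows "ideal I R"
proof (rule idealI)
  show "ring R" ..
  show "subgroup I (add_monoid R)"
  proof (rule add.subgroupI)
    show "I \<subseteq> carrier R" using assms(1) by simp
    show "I \<noteq> {}" using assms(2) by blast
    fix a assume a: "a \<in> I"
    have ac: "a \<in> carrier R" using a assms(1) by blast
    have "\<ominus> a = (\<ominus> \<one>) \<otimes> a" using ac by (simp add: l_minus)
    then show "\<ominus> a \<in> I" using assms(4)[OF a, of "\<ominus> \<one>"]
      by simp
  next
    fix a b assume "a \<in> I" "b \<in> I"
    then show "a \<oplus> b \<in> I" using assms(3) by simp
  qed
  fix a x assume a: "a \<in> I" and x: "x \<in> carrier R"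
  show "x \<otimes> a \<in> I" using assms(4) a x by blast
  show "a \<otimes> x \<in> I" using assms(4) a x assms(1) m_comm by (metis subsetD)
qed

lemma (in cring) exists_maximal:
  assumes "ideal I R" "\<one> \<notin> I"
  shows "\<exists>M. maximalideal M R \<and> I \<subseteq> M"
proof -
  define S where "S = {K. ideal K R \<and> I \<subseteq> K \<and> \<one> \<notin> K}"
  have "\<exists>M\<in>S. \<forall>Z\<in>S. M \<subseteq> Z \<longrightarrow> Z = M"
  proof (rule subset_Zorn_nonempty)
    show "S \<noteq> {}" using assms unfolding S_def by blast
    fix C assume C: "C \<noteq> {}" "subset.chain S C"
    have idC: "\<And>K. K \<in> C \<Longrightarrow> ideal K R \<and> I \<subseteq> K \<and> \<one> \<notin> K"
      using C(2) unfolding subset_chain_def S_def by blast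
    have ch: "\<And>U1 U2. U1 \<in> C \<Longrightarrow> U2 \<in> C \<Longrightarrow> U1 \<subseteq> U2 \<or> U2 \<subseteq> U1"
      using C(2) unfolding subset_chain_def by blast
    obtain K0 where K0: "K0 \<in> C" using C(1) by blast
    have "ideal (\<Union>C) R"
    proof (rule ideal_test)
      show "\<Union>C \<subseteq> carrier R"
      proof
        fix x assume "x \<in> \<Union>C"
        then obtain K where "K \<in> C" "x \<in> K" by blast
        then show "x \<in> carrier R" using idC ideal.Icarr by metis
      qed
      have "\<zero> \<in> K0" using idC[OF K0] additive_subgroup.zero_closed[OF ideal.axioms(1)] by metis
      then show "\<zero> \<in> \<Union>C" using K0 by blast
      fix a b assume "a \<in> \<Union>C" "b \<in> \<Union>C"
      then obtain U1 U2 where XY: "U1 \<in> C" "U2 \<in> C" "a \<in> U1" "b \<in> U2" by blast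
      show "a \<oplus> b \<in> \<Union>C"
      proof (cases "U1 \<subseteq> U2")
        case True
        then have "a \<oplus> b \<in> U2" using XY idC additive_subgroup.a_closed[OF ideal.axioms(1)] by (metis subsetD)
        then show ?thesis using XY by blast
      next
        case False
        then have "U2 \<subseteq> U1" using ch XY by blast
        then have "a \<oplus> b \<in> U1" using XY idC additive_subgroup.a_closed[OF ideal.axioms(1)] by (metis subsetD)
        then show ?thesis using XY by blast
      qed
    next
      fix a x assume "a \<in> \<Union>C" "x \<in> carrier R"
      then obtain K where "K \<in> C" "a \<in> K" "x \<in> carrier R" by blast
      then have "x \<otimes> a \<in> K" using idC ideal.I_l_closed by metis
      then show "x \<otimes> a \<in> \<Union>C" using \<open>K \<in> C\<close> by blast
    qed
    moreover have "I \<subseteq> \<Union>C" using K0 idC by blast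
    moreover have "\<one> \<notin> \<Union>C" using idC by blast
    ultimately show "\<Union>C \<in> S" unfolding S_def by blast
  qed
  then obtain M where MS: "M \<in> S" and Mmax: "\<And>Z. Z \<in> S \<Longrightarrow> M \<subseteq> Z \<Longrightarrow> Z = M" by blast
  have M: "ideal M R" "I \<subseteq> M" "\<one> \<notin> M" using MS unfolding S_def by auto
  have "maximalideal M R"
  proof (rule maximalidealI)
    show "ideal M R" using M by blast
    have "\<one> \<in> carrier R" by simp
    then show "carrier R \<noteq> M" using M(3) by metis
    fix K assume K: "ideal K R" "M \<subseteq> K" "K \<subseteq> carrier R"
    show "K = M \<or> K = carrier R"
    proof (cases "\<one> \<in> K")
      case True
      then show ?thesis using ideal.one_imp_carrier[OF K(1)] by blast
    next
      case False
      then have "K \<in> S" using K M unfolding S_def by auto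
      then show ?thesis using Mmax[of K] K(2) by blast
    qed
  qed
  then show ?thesis using M by blast
qed

lemma local_nonunit:
  assumes "local_ring A" "maximalideal m A" "a \<in> carrier A" "a \<notin> m"
  shows "a \<in> Units A"
proof (rule ccontr)
  assume nu: "a \<notin> Units A"
  interpret cring A using assms(1) unfolding local_ring_def by blast
  have id: "ideal (PIdl\<^bsub>A\<^esub> a) A" using cgenideal_ideal assms(3) by blast
  have "\<one>\<^bsub>A\<^esub> \<notin> PIdl\<^bsub>A\<^esub> a"
  proof
    assume "\<one>\<^bsub>A\<^esub> \<in> PIdl\<^bsub>A\<^esub> a"
    then obtain x where x: "x \<in> carrier A" "\<one>\<^bsub>A\<^esub> = x \<otimes>\<^bsub>A\<^esub> a" unfolding cgenideal_def by blast
    have "a \<otimes>\<^bsub>A\<^esub> x = \<one>\<^bsub>A\<^esub>" using x assms(3) m_comm by metis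
    moreover have "x \<otimes>\<^bsub>A\<^esub> a = \<one>\<^bsub>A\<^esub>" using x(2) by simp
    ultimately have "a \<in> Units A" using x(1) assms(3) unfolding Units_def by blast
    then show False using nu by blast
  qed
  then obtain M where M: "maximalideal M A" "PIdl\<^bsub>A\<^esub> a \<subseteq> M" using exists_maximal id by blast
  have "M = m" using M(1) assms(1,2) unfolding local_ring_def by blast
  moreover have "a \<in> PIdl\<^bsub>A\<^esub> a" using cgenideal_self assms(3) by blast
  ultimately show False using M(2) assms(4) by blast
qed


lemma (in cring) reg_iff:
  "g \<in> regular_elems R \<longleftrightarrow> g \<in> carrier R \<and> (\<forall>b\<in>carrier R. g \<otimes> b = \<zero> \<longrightarrow> b = \<zero>)"
  unfolding regular_elems_def zero_divisors_def by blast

lemma (in cring) reg_cancel: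
  assumes "g \<in> regular_elems R" "a \<in> carrier R" "b \<in> carrier R" "g \<otimes> a = g \<otimes> b"
  shows "a = b"
proof -
  have g: "g \<in> carrier R" using assms(1) reg_iff by blast
  have "g \<otimes> (a \<ominus> b) = \<zero>" using assms(2-4) g by algebra
  moreover have "a \<ominus> b \<in> carrier R" using assms(2,3) by simp
  ultimately have "a \<ominus> b = \<zero>" using assms(1) unfolding reg_iff by blast
  with assms(2,3) have "a = a \<ominus> (a \<ominus> b)" by algebra
  also from assms(2,3) have "a \<ominus> (a \<ominus> b) = b" by algebra
  finally show "a = b" .
qed

lemma (in cring) mult_ideal:
  assumes "ideal N R" "g \<in> carrier R"
  shows "ideal {n \<otimes> g | n. n \<in> N} R"
proof (rule ideal_test)
  have Nc: "N \<subseteq> carrier R" using ideal.Icarr[OF assms(1)] by blast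
  show "{n \<otimes> g | n. n \<in> N} \<subseteq> carrier R"
  proof
    fix x assume "x \<in> {n \<otimes> g | n. n \<in> N}"
    then obtain n where "n \<in> N" "x = n \<otimes> g" by blast
    then show "x \<in> carrier R" using Nc assms(2) by (metis m_closed subsetD)
  qed
  have "\<zero> \<in> N" using additive_subgroup.zero_closed[OF ideal.axioms(1)[OF assms(1)]] .
  moreover have "\<zero> = \<zero> \<otimes> g" using assms(2) by simp
  ultimately show "\<zero> \<in> {n \<otimes> g | n. n \<in> N}" by blast
  fix a b assume "a \<in> {n \<otimes> g | n. n \<in> N}" "b \<in> {n \<otimes> g | n. n \<in> N}"
  then obtain n1 n2 where n: "n1 \<in> N" "n2 \<in> N" "a = n1 \<otimes> g" "b = n2 \<otimes> g" by blast
  have nc: "n1 \<in> carrier R" "n2 \<in> carrier R" using n(1,2) Nc by blast+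
  have "a \<oplus> b = (n1 \<oplus> n2) \<otimes> g" using n(3,4) nc assms(2) by (simp add: l_distr)
  moreover have "n1 \<oplus> n2 \<in> N" using additive_subgroup.a_closed[OF ideal.axioms(1)[OF assms(1)] n(1,2)] .
  ultimately show "a \<oplus> b \<in> {n \<otimes> g | n. n \<in> N}" by blast
next
  have Nc: "N \<subseteq> carrier R" using ideal.Icarr[OF assms(1)] by blast
  fix a x assume "a \<in> {n \<otimes> g | n. n \<in> N}" "x \<in> carrier R"
  then obtain n1 where n: "n1 \<in> N" "a = n1 \<otimes> g" "x \<in> carrier R" by blast
  have nc: "n1 \<in> carrier R" using n(1) Nc by blast
  have "x \<otimes> a = (x \<otimes> n1) \<otimes> g" using n(2,3) nc assms(2) by (simp add: m_assoc)
  moreover have "x \<otimes> n1 \<in> N" using ideal.I_l_closed[OF assms(1) n(1) n(3)] .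
  ultimately show "x \<otimes> a \<in> {n \<otimes> g | n. n \<in> N}" by blast
qed

definition loc_data :: "('a, 'b) ring_scheme \<Rightarrow> 'a set \<Rightarrow> bool" where
  "loc_data R N \<longleftrightarrow> cring R \<and> ideal N R \<and> \<one>\<^bsub>R\<^esub> \<notin> N \<and> (\<forall>r\<in>carrier R. r \<notin> N \<longrightarrow> r \<in> Units R)"

lemma (in cring) not_in_mult_ideal:
  assumes "ideal N R" "\<one> \<notin> N" "g \<in> regular_elems R"
  shows "g \<notin> {n \<otimes> g | n. n \<in> N}"
proof
  assume "g \<in> {n \<otimes> g | n. n \<in> N}"
  then obtain n where n: "n \<in> N" "g = n \<otimes> g" by blast
  have gc: "g \<in> carrier R" using assms(3) reg_iff by blast
  have nc: "n \<in> carrier R" using ideal.Icarr[OF assms(1) n(1)] .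
  have "g \<otimes> n = n \<otimes> g" using gc nc m_comm by blast
  also have "\<dots> = g" using n(2) by (rule sym)
  also have "\<dots> = g \<otimes> \<one>" using gc by simp
  finally have "g \<otimes> n = g \<otimes> \<one>" .
  then have "n = \<one>" by (rule reg_cancel[OF assms(3) nc one_closed])
  then show False using n(1) assms(2) by blast
qed

lemma (in cring) gen_choice:
  assumes "loc_data R N" "S \<subseteq> carrier R" "g \<in> regular_elems R" "Idl S = PIdl g"
  shows "\<exists>s\<in>S. PIdl s = PIdl g \<and> s \<in> regular_elems R"
proof (rule ccontr)
  assume H: "\<not> ?thesis"
  have N: "ideal N R" "\<one> \<notin> N" "\<And>r. r \<in> carrier R \<Longrightarrow> r \<notin> N \<Longrightarrow> r \<in> Units R"
    using assms(1) unfolding loc_data_def by blast+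
  have gc: "g \<in> carrier R" using assms(3) reg_iff by blast
  have regg: "\<And>b. b \<in> carrier R \<Longrightarrow> g \<otimes> b = \<zero> \<Longrightarrow> b = \<zero>" using assms(3) reg_iff by blast
  have sub: "S \<subseteq> {n \<otimes> g | n. n \<in> N}"
  proof
    fix s assume s: "s \<in> S"
    have "s \<in> PIdl g" using genideal_self assms(2,4) s by blast
    then obtain t where t: "t \<in> carrier R" "s = t \<otimes> g" unfolding cgenideal_def by blast
    show "s \<in> {n \<otimes> g | n. n \<in> N}"
    proof (rule ccontr)
      assume "s \<notin> {n \<otimes> g | n. n \<in> N}"
      then have tN: "t \<notin> N" using t by blast
      then have tu: "t \<in> Units R" using N(3) t(1) by blast
      have "PIdl s = PIdl g"
      proof
        show "PIdl s \<subseteq> PIdl g"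
        proof
          fix z assume "z \<in> PIdl s"
          then obtain x where x: "x \<in> carrier R" "z = x \<otimes> s" unfolding cgenideal_def by blast
          then have "z = (x \<otimes> t) \<otimes> g" using t gc by (simp add: m_assoc)
          then show "z \<in> PIdl g" using x t unfolding cgenideal_def by blast
        qed
        show "PIdl g \<subseteq> PIdl s"
        proof
          fix z assume "z \<in> PIdl g"
          then obtain x where x: "x \<in> carrier R" "z = x \<otimes> g" unfolding cgenideal_def by blast
          have ic: "inv t \<in> carrier R" using tu by blast
          have "(x \<otimes> inv t) \<otimes> s = x \<otimes> (inv t \<otimes> t) \<otimes> g" using t gc x ic by (simp add: m_assoc)
          also have "\<dots> = z" using tu x by simp
          finally have "x \<otimes> inv t \<otimes> s = z" .
          moreover have "x \<otimes> inv t \<in> carrier R" using x ic by simp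
          ultimately show "z \<in> PIdl s" unfolding cgenideal_def by blast
        qed
      qed
      moreover have "s \<in> regular_elems R"
        unfolding reg_iff
      proof (intro conjI ballI impI)
        show sc: "s \<in> carrier R" using t gc by simp
        fix b assume b: "b \<in> carrier R" "s \<otimes> b = \<zero>"
        have ic: "inv t \<in> carrier R" using tu by blast
        have "g \<otimes> (t \<otimes> b) = s \<otimes> b" using b(1) t gc by (simp add: m_ac)
        then have "g \<otimes> (t \<otimes> b) = \<zero>" using b(2) by simp
        then have tb: "t \<otimes> b = \<zero>" using regg b(1) t(1) m_closed by blast
        have "b = (inv t \<otimes> t) \<otimes> b" using tu b(1) by simp
        also have "\<dots> = inv t \<otimes> (t \<otimes> b)" using ic t(1) b(1) by (rule m_assoc)
        also have "\<dots> = \<zero>" using tb ic by simp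
        finally show "b = \<zero>" .
      qed
      ultimately show False using H s by blast
    qed
  qed
  have "Idl S \<subseteq> {n \<otimes> g | n. n \<in> N}"
    using genideal_minimal[OF mult_ideal[OF N(1) gc] sub] .
  then have "g \<in> {n \<otimes> g | n. n \<in> N}" using assms(4) cgenideal_self gc by blast
  then show False using not_in_mult_ideal[OF N(1,2) assms(3)] by blast
qed


lemma (in cring) principal_invertible:
  assumes "x \<in> regular_elems R" shows "invertible_ideal R (PIdl x)"
proof -
  have xc: "x \<in> carrier R" using assms reg_iff by blast
  have "ideal (PIdl x) R" using cgenideal_ideal[OF xc] .
  moreover have "ideal (carrier R) R" by (rule oneideal)
  moreover have "ideal_prod R (PIdl x) (carrier R) = PIdl x" using ideal_prod_one[OF cgenideal_ideal[OF xc]] .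
  ultimately show ?thesis unfolding invertible_ideal_def using assms by blast
qed

lemma (in cring) inv_principal:
  assumes "loc_data R N" "invertible_ideal R I"
  shows "\<exists>x. x \<in> regular_elems R \<and> x \<in> I \<and> I = PIdl x"
proof -
  have N: "ideal N R" "\<one> \<notin> N" "\<And>r. r \<in> carrier R \<Longrightarrow> r \<notin> N \<Longrightarrow> r \<in> Units R"
    using assms(1) unfolding loc_data_def by blast+
  obtain K s where K: "ideal K R" "s \<in> regular_elems R" "ideal_prod R I K = PIdl s" and I: "ideal I R"
    using assms(2) unfolding invertible_ideal_def by blast
  have sc: "s \<in> carrier R" using K(2) reg_iff by blast
  have regs: "\<And>b. b \<in> carrier R \<Longrightarrow> s \<otimes> b = \<zero> \<Longrightarrow> b = \<zero>" using K(2) reg_iff by blast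
  have MI: "ideal {n \<otimes> s | n. n \<in> N} R" using mult_ideal[OF N(1) sc] .
  have "\<exists>x\<in>I. \<exists>y\<in>K. x \<otimes> y \<notin> {n \<otimes> s | n. n \<in> N}"
  proof (rule ccontr)
    assume "\<not> ?thesis"
    then have H: "\<And>x y. x \<in> I \<Longrightarrow> y \<in> K \<Longrightarrow> x \<otimes> y \<in> {n \<otimes> s | n. n \<in> N}" by blast
    have "ideal_prod R I K \<subseteq> {n \<otimes> s | n. n \<in> N}"
    proof
      fix z assume "z \<in> ideal_prod R I K"
      then show "z \<in> {n \<otimes> s | n. n \<in> N}"
      proof (induct z rule: ideal_prod.induct)
        case (prod i j) then show ?case using H by blast
      next
        case (sum s1 s2) then show ?case
          using additive_subgroup.a_closed[OF ideal.axioms(1)[OF MI]] by blast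
      qed
    qed
    then have "s \<in> {n \<otimes> s | n. n \<in> N}" using K(3) cgenideal_self[OF sc] by blast
    then show False using not_in_mult_ideal[OF N(1,2) K(2)] by blast
  qed
  then obtain x y where xy: "x \<in> I" "y \<in> K" "x \<otimes> y \<notin> {n \<otimes> s | n. n \<in> N}" by blast
  have xc: "x \<in> carrier R" using ideal.Icarr[OF I xy(1)] .
  have yc: "y \<in> carrier R" using ideal.Icarr[OF K(1) xy(2)] .
  have "x \<otimes> y \<in> ideal_prod R I K" by (rule ideal_prod.prod[OF xy(1,2)])
  then obtain r where r: "r \<in> carrier R" "x \<otimes> y = r \<otimes> s" using K(3) unfolding cgenideal_def by blast
  have "r \<notin> N" using r(2) xy(3) by blast
  then have ru: "r \<in> Units R" using N(3) r(1) by blast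
  have ic: "inv r \<in> carrier R" using ru by blast
  have "I = PIdl x"
  proof
    show "PIdl x \<subseteq> I"
    proof
      fix z assume "z \<in> PIdl x"
      then obtain w where w: "w \<in> carrier R" "z = w \<otimes> x" unfolding cgenideal_def by blast
      show "z \<in> I" unfolding w(2) using ideal.I_l_closed[OF I xy(1) w(1)] .
    qed
    show "I \<subseteq> PIdl x"
    proof
      fix z assume z: "z \<in> I"
      have zc: "z \<in> carrier R" using ideal.Icarr[OF I z] .
      have "z \<otimes> y \<in> ideal_prod R I K" by (rule ideal_prod.prod[OF z xy(2)])
      then obtain t where t: "t \<in> carrier R" "z \<otimes> y = t \<otimes> s" using K(3) unfolding cgenideal_def by blast
      have "s \<otimes> (z \<otimes> r) = z \<otimes> (r \<otimes> s)" using sc zc r(1) by (simp add: m_ac)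
      also have "\<dots> = z \<otimes> (x \<otimes> y)" using r(2) by simp
      also have "\<dots> = x \<otimes> (z \<otimes> y)" using xc yc zc by (simp add: m_ac)
      also have "\<dots> = x \<otimes> (t \<otimes> s)" using t(2) by simp
      also have "\<dots> = s \<otimes> (x \<otimes> t)" using xc t(1) sc by (simp add: m_ac)
      finally have "z \<otimes> r = x \<otimes> t" using reg_cancel[OF K(2)] zc r(1) xc t(1) by simp
      have "z = z \<otimes> (r \<otimes> inv r)" using zc ru by simp
      also have "\<dots> = (z \<otimes> r) \<otimes> inv r" using zc r(1) ic by (simp add: m_assoc)
      also have "\<dots> = (x \<otimes> t) \<otimes> inv r" using \<open>z \<otimes> r = x \<otimes> t\<close> by simp
      also have "\<dots> = (t \<otimes> inv r) \<otimes> x" using xc t(1) ic by (simp add: m_ac)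
      finally have "z = (t \<otimes> inv r) \<otimes> x" .
      moreover have "t \<otimes> inv r \<in> carrier R" using t(1) ic by simp
      ultimately show "z \<in> PIdl x" unfolding cgenideal_def by blast
    qed
  qed
  moreover have "x \<in> regular_elems R"
    unfolding reg_iff
  proof (intro conjI ballI impI)
    show "x \<in> carrier R" by (rule xc)
    fix b assume b: "b \<in> carrier R" "x \<otimes> b = \<zero>"
    have "s \<otimes> (r \<otimes> b) = (x \<otimes> y) \<otimes> b" using r(2) sc r(1) b(1) by (simp add: m_ac)
    also have "\<dots> = y \<otimes> (x \<otimes> b)" using xc yc b(1) by (simp add: m_ac)
    also have "\<dots> = \<zero>" using b(2) yc by simp
    finally have rb: "r \<otimes> b = \<zero>" using regs r(1) b(1) by simp
    have "b = (inv r \<otimes> r) \<otimes> b" using ru b(1) by simp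
    also have "\<dots> = inv r \<otimes> (r \<otimes> b)" using ic r(1) b(1) by (rule m_assoc)
    also have "\<dots> = \<zero>" using rb ic by simp
    finally show "b = \<zero>" .
  qed
  ultimately show ?thesis using xy(1) by blast
qed


lemma RDP_simps:
  "x \<otimes>\<^bsub>RDirProd A B\<^esub> y = (fst x \<otimes>\<^bsub>A\<^esub> fst y, snd x \<otimes>\<^bsub>B\<^esub> snd y)"
  "x \<oplus>\<^bsub>RDirProd A B\<^esub> y = (fst x \<oplus>\<^bsub>A\<^esub> fst y, snd x \<oplus>\<^bsub>B\<^esub> snd y)"
  "\<zero>\<^bsub>RDirProd A B\<^esub> = (\<zero>\<^bsub>A\<^esub>, \<zero>\<^bsub>B\<^esub>)"
  "\<one>\<^bsub>RDirProd A B\<^esub> = (\<one>\<^bsub>A\<^esub>, \<one>\<^bsub>B\<^esub>)"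
  by (auto simp: RDirProd_def DirProd_def monoid.defs case_prod_beta)

locale amal = ring_hom_cring A B f for A (structure) and B (structure) and f +
  fixes J m
  assumes loc: "local_ring A" and mx: "maximalideal m A"
    and idJ: "ideal J B" and Jp: "J \<noteq> carrier B"
    and Jf: "J \<subseteq> f ` carrier A"
    and regf: "f ` regular_elems A = regular_elems B"
begin

abbreviation "AJ \<equiv> amalg A B f J"

lemma AJ_simps:
  "x \<otimes>\<^bsub>AJ\<^esub> y = (fst x \<otimes>\<^bsub>A\<^esub> fst y, snd x \<otimes>\<^bsub>B\<^esub> snd y)"
  "x \<oplus>\<^bsub>AJ\<^esub> y = (fst x \<oplus>\<^bsub>A\<^esub> fst y, snd x \<oplus>\<^bsub>B\<^esub> snd y)"
  "\<zero>\<^bsub>AJ\<^esub> = (\<zero>\<^bsub>A\<^esub>, \<zero>\<^bsub>B\<^esub>)"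
  "\<one>\<^bsub>AJ\<^esub> = (\<one>\<^bsub>A\<^esub>, \<one>\<^bsub>B\<^esub>)"
  unfolding amalg_def by (simp_all add: RDP_simps[symmetric])

lemma AJ_carrier: "carrier AJ = {(a, f a \<oplus>\<^bsub>B\<^esub> j) | a j. a \<in> carrier A \<and> j \<in> J}"
  unfolding amalg_def by simp

lemma Jc: "j \<in> J \<Longrightarrow> j \<in> carrier B"
  using ideal.Icarr[OF idJ] by blast

lemma mem_AJ: "(x, y) \<in> carrier AJ \<longleftrightarrow> x \<in> carrier A \<and> (\<exists>j\<in>J. y = f x \<oplus>\<^bsub>B\<^esub> j)"
  unfolding AJ_carrier by blast

lemma AJ_sub: "carrier AJ \<subseteq> carrier (RDirProd A B)"
proof
  fix z assume "z \<in> carrier AJ"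
  then obtain a j where "z = (a, f a \<oplus>\<^bsub>B\<^esub> j)" "a \<in> carrier A" "j \<in> J" unfolding AJ_carrier by blast
  then show "z \<in> carrier (RDirProd A B)" using Jc by (simp add: RDirProd_carrier)
qed

lemma J_add: "j1 \<in> J \<Longrightarrow> j2 \<in> J \<Longrightarrow> j1 \<oplus>\<^bsub>B\<^esub> j2 \<in> J"
  using additive_subgroup.a_closed[OF ideal.axioms(1)[OF idJ]] by blast
lemma J_neg: "j1 \<in> J \<Longrightarrow> \<ominus>\<^bsub>B\<^esub> j1 \<in> J"
  using additive_subgroup.a_inv_closed[OF ideal.axioms(1)[OF idJ]] by blast
lemma J_mult: "j1 \<in> J \<Longrightarrow> x \<in> carrier B \<Longrightarrow> x \<otimes>\<^bsub>B\<^esub> j1 \<in> J"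
  using ideal.I_l_closed[OF idJ] by blast
lemma J_zero: "\<zero>\<^bsub>B\<^esub> \<in> J"
  using additive_subgroup.zero_closed[OF ideal.axioms(1)[OF idJ]] by blast

lemma RDP_ring: "ring (RDirProd A B)"
  using RDirProd_ring[OF R.ring_axioms S.ring_axioms] .

lemma RDP_neg:
  assumes "a \<in> carrier A" "b \<in> carrier B"
  shows "\<ominus>\<^bsub>RDirProd A B\<^esub> (a, b) = (\<ominus>\<^bsub>A\<^esub> a, \<ominus>\<^bsub>B\<^esub> b)"
proof -
  interpret P: ring "RDirProd A B" by (rule RDP_ring)
  show ?thesis
  proof (rule P.minus_equality)
    show "(\<ominus>\<^bsub>A\<^esub> a, \<ominus>\<^bsub>B\<^esub> b) \<oplus>\<^bsub>RDirProd A B\<^esub> (a, b) = \<zero>\<^bsub>RDirProd A B\<^esub>"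
      using assms by (simp add: RDP_simps R.l_neg S.l_neg)
    show "(a, b) \<in> carrier (RDirProd A B)" using assms by (simp add: RDirProd_carrier)
    show "(\<ominus>\<^bsub>A\<^esub> a, \<ominus>\<^bsub>B\<^esub> b) \<in> carrier (RDirProd A B)" using assms by (simp add: RDirProd_carrier)
  qed
qed

lemma AJ_cring: "cring AJ"
proof -
  interpret P: ring "RDirProd A B" by (rule RDP_ring)
  have sr: "subring (carrier AJ) (RDirProd A B)"
  proof (rule P.subringI)
    show "carrier AJ \<subseteq> carrier (RDirProd A B)" by (rule AJ_sub)
    have "(\<one>\<^bsub>A\<^esub>, \<one>\<^bsub>B\<^esub>) = (\<one>\<^bsub>A\<^esub>, f \<one>\<^bsub>A\<^esub> \<oplus>\<^bsub>B\<^esub> \<zero>\<^bsub>B\<^esub>)" by simp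
    then show "\<one>\<^bsub>RDirProd A B\<^esub> \<in> carrier AJ" unfolding RDP_simps AJ_carrier using J_zero by blast
  next
    fix h assume "h \<in> carrier AJ"
    then obtain a j where h: "h = (a, f a \<oplus>\<^bsub>B\<^esub> j)" "a \<in> carrier A" "j \<in> J" unfolding AJ_carrier by blast
    have jc: "j \<in> carrier B" using Jc h(3) .
    have "\<ominus>\<^bsub>RDirProd A B\<^esub> h = (\<ominus>\<^bsub>A\<^esub> a, \<ominus>\<^bsub>B\<^esub> (f a \<oplus>\<^bsub>B\<^esub> j))" using h jc by (simp add: RDP_neg)
    also have "\<dots> = (\<ominus>\<^bsub>A\<^esub> a, f (\<ominus>\<^bsub>A\<^esub> a) \<oplus>\<^bsub>B\<^esub> (\<ominus>\<^bsub>B\<^esub> j))" using h(2) jc by (simp add: S.minus_add)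
    finally show "\<ominus>\<^bsub>RDirProd A B\<^esub> h \<in> carrier AJ" unfolding AJ_carrier using h(2) J_neg[OF h(3)] by blast
  next
    fix h1 h2 assume "h1 \<in> carrier AJ" "h2 \<in> carrier AJ"
    then obtain a1 j1 a2 j2 where h: "h1 = (a1, f a1 \<oplus>\<^bsub>B\<^esub> j1)" "a1 \<in> carrier A" "j1 \<in> J"
      "h2 = (a2, f a2 \<oplus>\<^bsub>B\<^esub> j2)" "a2 \<in> carrier A" "j2 \<in> J" unfolding AJ_carrier by blast
    have jc: "j1 \<in> carrier B" "j2 \<in> carrier B" using Jc h(3,6) by auto
    have fc: "f a1 \<in> carrier B" "f a2 \<in> carrier B" using h(2,5) by auto
    let ?j = "f a1 \<otimes>\<^bsub>B\<^esub> j2 \<oplus>\<^bsub>B\<^esub> (f a2 \<otimes>\<^bsub>B\<^esub> j1 \<oplus>\<^bsub>B\<^esub> j1 \<otimes>\<^bsub>B\<^esub> j2)"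
    have "h1 \<otimes>\<^bsub>RDirProd A B\<^esub> h2 = (a1 \<otimes>\<^bsub>A\<^esub> a2, (f a1 \<oplus>\<^bsub>B\<^esub> j1) \<otimes>\<^bsub>B\<^esub> (f a2 \<oplus>\<^bsub>B\<^esub> j2))"
      using h by (simp add: RDP_simps)
    also have "(f a1 \<oplus>\<^bsub>B\<^esub> j1) \<otimes>\<^bsub>B\<^esub> (f a2 \<oplus>\<^bsub>B\<^esub> j2) = f a1 \<otimes>\<^bsub>B\<^esub> f a2 \<oplus>\<^bsub>B\<^esub> ?j"
      using jc fc by algebra
    also have "f a1 \<otimes>\<^bsub>B\<^esub> f a2 = f (a1 \<otimes>\<^bsub>A\<^esub> a2)" using h(2,5) by simp
    finally have eq: "h1 \<otimes>\<^bsub>RDirProd A B\<^esub> h2 = (a1 \<otimes>\<^bsub>A\<^esub> a2, f (a1 \<otimes>\<^bsub>A\<^esub> a2) \<oplus>\<^bsub>B\<^esub> ?j)" .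
    have "?j \<in> J" using J_add J_mult jc fc h(3,6) S.m_comm by metis
    moreover have "a1 \<otimes>\<^bsub>A\<^esub> a2 \<in> carrier A" using h(2,5) by simp
    ultimately show "h1 \<otimes>\<^bsub>RDirProd A B\<^esub> h2 \<in> carrier AJ" unfolding eq AJ_carrier by blast
  next
    fix h1 h2 assume "h1 \<in> carrier AJ" "h2 \<in> carrier AJ"
    then obtain a1 j1 a2 j2 where h: "h1 = (a1, f a1 \<oplus>\<^bsub>B\<^esub> j1)" "a1 \<in> carrier A" "j1 \<in> J"
      "h2 = (a2, f a2 \<oplus>\<^bsub>B\<^esub> j2)" "a2 \<in> carrier A" "j2 \<in> J" unfolding AJ_carrier by blast
    have jc: "j1 \<in> carrier B" "j2 \<in> carrier B" using Jc h(3,6) by auto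
    have fc: "f a1 \<in> carrier B" "f a2 \<in> carrier B" using h(2,5) by auto
    have "h1 \<oplus>\<^bsub>RDirProd A B\<^esub> h2 = (a1 \<oplus>\<^bsub>A\<^esub> a2, (f a1 \<oplus>\<^bsub>B\<^esub> j1) \<oplus>\<^bsub>B\<^esub> (f a2 \<oplus>\<^bsub>B\<^esub> j2))"
      using h by (simp add: RDP_simps)
    also have "(f a1 \<oplus>\<^bsub>B\<^esub> j1) \<oplus>\<^bsub>B\<^esub> (f a2 \<oplus>\<^bsub>B\<^esub> j2) = (f a1 \<oplus>\<^bsub>B\<^esub> f a2) \<oplus>\<^bsub>B\<^esub> (j1 \<oplus>\<^bsub>B\<^esub> j2)"
      using jc fc by algebra
    also have "f a1 \<oplus>\<^bsub>B\<^esub> f a2 = f (a1 \<oplus>\<^bsub>A\<^esub> a2)" using h(2,5) by simp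
    finally have eq: "h1 \<oplus>\<^bsub>RDirProd A B\<^esub> h2 = (a1 \<oplus>\<^bsub>A\<^esub> a2, f (a1 \<oplus>\<^bsub>A\<^esub> a2) \<oplus>\<^bsub>B\<^esub> (j1 \<oplus>\<^bsub>B\<^esub> j2))" .
    have "j1 \<oplus>\<^bsub>B\<^esub> j2 \<in> J" using J_add h(3,6) .
    moreover have "a1 \<oplus>\<^bsub>A\<^esub> a2 \<in> carrier A" using h(2,5) by simp
    ultimately show "h1 \<oplus>\<^bsub>RDirProd A B\<^esub> h2 \<in> carrier AJ" unfolding eq AJ_carrier by blast
  qed
  have "subcring (carrier AJ) (RDirProd A B)"
  proof (rule P.subcringI[OF sr])
    fix h1 h2 assume "h1 \<in> carrier AJ" "h2 \<in> carrier AJ"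
    then have "h1 \<in> carrier (RDirProd A B)" "h2 \<in> carrier (RDirProd A B)" using AJ_sub by blast+
    then show "h1 \<otimes>\<^bsub>RDirProd A B\<^esub> h2 = h2 \<otimes>\<^bsub>RDirProd A B\<^esub> h1"
      by (auto simp: RDP_simps RDirProd_carrier R.m_comm S.m_comm)
  qed
  then have "cring ((RDirProd A B)\<lparr>carrier := carrier AJ\<rparr>)"
    using P.subcring_iff[OF AJ_sub] by blast
  moreover have "(RDirProd A B)\<lparr>carrier := carrier AJ\<rparr> = AJ"
    unfolding amalg_def by simp
  ultimately show ?thesis by simp
qed


lemma one_notin_m: "\<one>\<^bsub>A\<^esub> \<notin> m"
proof
  assume "\<one>\<^bsub>A\<^esub> \<in> m"
  then have "m = carrier A" using ideal.one_imp_carrier[OF maximalideal.axioms(1)[OF mx]] by blast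
  then show False using maximalideal.I_notcarr[OF mx] by simp
qed

lemma m_carr: "m \<subseteq> carrier A"
  using ideal.Icarr[OF maximalideal.axioms(1)[OF mx]] by blast

lemma zero_in_m: "\<zero>\<^bsub>A\<^esub> \<in> m"
  using additive_subgroup.zero_closed[OF ideal.axioms(1)[OF maximalideal.axioms(1)[OF mx]]] .

lemma one_ne_zero_A: "\<one>\<^bsub>A\<^esub> \<noteq> \<zero>\<^bsub>A\<^esub>"
  using one_notin_m zero_in_m by metis

lemma nonunit_m: "a \<in> carrier A \<Longrightarrow> a \<notin> m \<Longrightarrow> a \<in> Units A"
  using local_nonunit[OF loc mx] by blast

lemma I0_m:
  assumes "c \<in> carrier A" "f c \<in> J" shows "c \<in> m"
proof (rule ccontr)
  assume "c \<notin> m"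
  then have u: "c \<in> Units A" using nonunit_m assms(1) by blast
  have ic: "inv\<^bsub>A\<^esub> c \<in> carrier A" using u by blast
  have "f (inv\<^bsub>A\<^esub> c) \<otimes>\<^bsub>B\<^esub> f c \<in> J" using J_mult[OF assms(2)] ic by simp
  moreover have "f (inv\<^bsub>A\<^esub> c) \<otimes>\<^bsub>B\<^esub> f c = \<one>\<^bsub>B\<^esub>"
    using ic assms(1) u by (simp add: hom_mult[symmetric] del: hom_mult)
  ultimately have "\<one>\<^bsub>B\<^esub> \<in> J" by simp
  then have "J = carrier B" using ideal.one_imp_carrier[OF idJ] by blast
  then show False using Jp by blast
qed

lemma diag_mem: "a \<in> carrier A \<Longrightarrow> (a, f a) \<in> carrier AJ"
  unfolding mem_AJ using J_zero by (metis hom_closed S.r_zero)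

lemma zeroJ_mem: "j \<in> J \<Longrightarrow> (\<zero>\<^bsub>A\<^esub>, j) \<in> carrier AJ"
  unfolding mem_AJ using Jc by (metis R.zero_closed hom_zero S.l_zero)

lemma AJ_mem_D: "z \<in> carrier AJ \<Longrightarrow> fst z \<in> carrier A \<and> snd z \<in> carrier B"
  using AJ_sub by (auto simp: RDirProd_carrier)

lemma reg_I:
  assumes "(x, y) \<in> carrier AJ" "x \<in> regular_elems A" "y \<in> regular_elems B"
  shows "(x, y) \<in> regular_elems AJ"
proof -
  interpret Q: cring AJ by (rule AJ_cring)
  show ?thesis unfolding Q.reg_iff
  proof (intro conjI ballI impI)
    show "(x, y) \<in> carrier AJ" by fact
    fix w assume w: "w \<in> carrier AJ" "(x, y) \<otimes>\<^bsub>AJ\<^esub> w = \<zero>\<^bsub>AJ\<^esub>"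
    have wc: "fst w \<in> carrier A" "snd w \<in> carrier B" using AJ_mem_D[OF w(1)] by auto
    have "x \<otimes>\<^bsub>A\<^esub> fst w = \<zero>\<^bsub>A\<^esub>" "y \<otimes>\<^bsub>B\<^esub> snd w = \<zero>\<^bsub>B\<^esub>" using w(2) by (simp_all add: AJ_simps)
    then have "fst w = \<zero>\<^bsub>A\<^esub>" "snd w = \<zero>\<^bsub>B\<^esub>"
      using assms(2,3) wc unfolding R.reg_iff S.reg_iff by blast+
    then show "w = \<zero>\<^bsub>AJ\<^esub>" by (simp add: AJ_simps prod_eq_iff)
  qed
qed

lemma reg_D:
  assumes "(x, y) \<in> regular_elems AJ"
  shows "x \<in> regular_elems A \<and> y \<in> regular_elems B"
proof -
  interpret Q: cring AJ by (rule AJ_cring)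
  have xyc: "(x, y) \<in> carrier AJ" and regAJ: "\<And>w. w \<in> carrier AJ \<Longrightarrow> (x, y) \<otimes>\<^bsub>AJ\<^esub> w = \<zero>\<^bsub>AJ\<^esub> \<Longrightarrow> w = \<zero>\<^bsub>AJ\<^esub>"
    using assms unfolding Q.reg_iff by blast+
  obtain j where xc: "x \<in> carrier A" and j: "j \<in> J" and y: "y = f x \<oplus>\<^bsub>B\<^esub> j" using xyc unfolding mem_AJ by blast
  obtain c where c: "c \<in> carrier A" "j = f c" using Jf j by blast
  have jc: "j \<in> carrier B" using Jc j .
  have yc: "y \<in> carrier B" using y jc xc by simp
  have xreg: "x \<in> regular_elems A"
    unfolding R.reg_iff
  proof (intro conjI ballI impI)
    show "x \<in> carrier A" by (rule xc)
    fix z assume z: "z \<in> carrier A" "x \<otimes>\<^bsub>A\<^esub> z = \<zero>\<^bsub>A\<^esub>"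
    show "z = \<zero>\<^bsub>A\<^esub>"
    proof (cases "\<exists>d\<in>carrier A. f d \<in> J \<and> d \<otimes>\<^bsub>A\<^esub> z \<noteq> \<zero>\<^bsub>A\<^esub>")
      case True
      then obtain d where d: "d \<in> carrier A" "f d \<in> J" "d \<otimes>\<^bsub>A\<^esub> z \<noteq> \<zero>\<^bsub>A\<^esub>" by blast
      have dzc: "d \<otimes>\<^bsub>A\<^esub> z \<in> carrier A" using d(1) z(1) by simp
      have "\<ominus>\<^bsub>B\<^esub> (f z \<otimes>\<^bsub>B\<^esub> f d) \<in> J" using J_neg J_mult d(2) z(1) by simp
      moreover have "\<zero>\<^bsub>B\<^esub> = f (d \<otimes>\<^bsub>A\<^esub> z) \<oplus>\<^bsub>B\<^esub> \<ominus>\<^bsub>B\<^esub> (f z \<otimes>\<^bsub>B\<^esub> f d)"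
        using d(1) z(1) by (simp add: S.m_comm S.r_neg)
      ultimately have wm: "(d \<otimes>\<^bsub>A\<^esub> z, \<zero>\<^bsub>B\<^esub>) \<in> carrier AJ" unfolding mem_AJ using dzc by blast
      have "x \<otimes>\<^bsub>A\<^esub> (d \<otimes>\<^bsub>A\<^esub> z) = d \<otimes>\<^bsub>A\<^esub> (x \<otimes>\<^bsub>A\<^esub> z)" using xc d(1) z(1) by (simp add: R.m_lcomm)
      also have "\<dots> = \<zero>\<^bsub>A\<^esub>" using z(2) d(1) by simp
      finally have "(x, y) \<otimes>\<^bsub>AJ\<^esub> (d \<otimes>\<^bsub>A\<^esub> z, \<zero>\<^bsub>B\<^esub>) = \<zero>\<^bsub>AJ\<^esub>" using yc by (simp add: AJ_simps)
      then have "(d \<otimes>\<^bsub>A\<^esub> z, \<zero>\<^bsub>B\<^esub>) = \<zero>\<^bsub>AJ\<^esub>" using regAJ wm by blast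
      then have "d \<otimes>\<^bsub>A\<^esub> z = \<zero>\<^bsub>A\<^esub>" by (simp add: AJ_simps)
      then show ?thesis using d(3) by blast
    next
      case False
      then have cz: "c \<otimes>\<^bsub>A\<^esub> z = \<zero>\<^bsub>A\<^esub>" using c j by blast
      have wm: "(z, f z) \<in> carrier AJ" using diag_mem z(1) .
      have "y \<otimes>\<^bsub>B\<^esub> f z = f ((x \<oplus>\<^bsub>A\<^esub> c) \<otimes>\<^bsub>A\<^esub> z)" using y c xc z(1) by simp
      also have "(x \<oplus>\<^bsub>A\<^esub> c) \<otimes>\<^bsub>A\<^esub> z = \<zero>\<^bsub>A\<^esub>" using xc c(1) z cz by (simp add: R.l_distr)
      finally have "y \<otimes>\<^bsub>B\<^esub> f z = \<zero>\<^bsub>B\<^esub>" by simp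
      then have "(x, y) \<otimes>\<^bsub>AJ\<^esub> (z, f z) = \<zero>\<^bsub>AJ\<^esub>" using z(2) by (simp add: AJ_simps)
      then have "(z, f z) = \<zero>\<^bsub>AJ\<^esub>" using regAJ wm by blast
      then show ?thesis by (simp add: AJ_simps)
    qed
  qed
  have yreg: "y \<in> regular_elems B"
    unfolding S.reg_iff
  proof (intro conjI ballI impI)
    show "y \<in> carrier B" by (rule yc)
    fix b assume b: "b \<in> carrier B" "y \<otimes>\<^bsub>B\<^esub> b = \<zero>\<^bsub>B\<^esub>"
    show "b = \<zero>\<^bsub>B\<^esub>"
    proof (cases "\<exists>j'\<in>J. b \<otimes>\<^bsub>B\<^esub> j' \<noteq> \<zero>\<^bsub>B\<^esub>")
      case True
      then obtain j' where j': "j' \<in> J" "b \<otimes>\<^bsub>B\<^esub> j' \<noteq> \<zero>\<^bsub>B\<^esub>" by blast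
      have j'c: "j' \<in> carrier B" using Jc j'(1) .
      have wm: "(\<zero>\<^bsub>A\<^esub>, b \<otimes>\<^bsub>B\<^esub> j') \<in> carrier AJ" using zeroJ_mem J_mult j'(1) b(1) by blast
      have "y \<otimes>\<^bsub>B\<^esub> (b \<otimes>\<^bsub>B\<^esub> j') = (y \<otimes>\<^bsub>B\<^esub> b) \<otimes>\<^bsub>B\<^esub> j'" using yc b(1) j'c by (simp add: S.m_assoc)
      also have "\<dots> = \<zero>\<^bsub>B\<^esub>" using b(2) j'c by simp
      finally have "(x, y) \<otimes>\<^bsub>AJ\<^esub> (\<zero>\<^bsub>A\<^esub>, b \<otimes>\<^bsub>B\<^esub> j') = \<zero>\<^bsub>AJ\<^esub>" using xc by (simp add: AJ_simps)
      then have "(\<zero>\<^bsub>A\<^esub>, b \<otimes>\<^bsub>B\<^esub> j') = \<zero>\<^bsub>AJ\<^esub>" using regAJ wm by blast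
      then show ?thesis using j'(2) by (simp add: AJ_simps)
    next
      case False
      then have bj: "b \<otimes>\<^bsub>B\<^esub> j = \<zero>\<^bsub>B\<^esub>" using j by blast
      have "f x \<in> regular_elems B" using regf xreg by blast
      moreover have "f x \<otimes>\<^bsub>B\<^esub> b = \<zero>\<^bsub>B\<^esub>"
      proof -
        have "\<zero>\<^bsub>B\<^esub> = y \<otimes>\<^bsub>B\<^esub> b" using b(2) by simp
        also have "\<dots> = f x \<otimes>\<^bsub>B\<^esub> b \<oplus>\<^bsub>B\<^esub> b \<otimes>\<^bsub>B\<^esub> j" unfolding y using hom_closed[OF xc] jc b(1) by algebra
        also have "\<dots> = f x \<otimes>\<^bsub>B\<^esub> b" using bj xc b(1) by simp
        finally show ?thesis by simp
      qed
      ultimately show ?thesis using b(1) unfolding S.reg_iff by blast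
    qed
  qed
  show ?thesis using xreg yreg by blast
qed


lemma loc_A: "loc_data A m"
  unfolding loc_data_def using R.is_cring maximalideal.axioms(1)[OF mx] one_notin_m nonunit_m by blast

definition pre where
  "pre I = {z \<in> carrier AJ. fst z \<in> I}"

lemma pre_ideal:
  assumes "ideal I A" shows "ideal (pre I) AJ"
proof -
  interpret Q: cring AJ by (rule AJ_cring)
  show ?thesis
  proof (rule Q.ideal_test)
    show "pre I \<subseteq> carrier AJ" unfolding pre_def by blast
    have "\<zero>\<^bsub>A\<^esub> \<in> I" using additive_subgroup.zero_closed[OF ideal.axioms(1)[OF assms]] .
    then show "\<zero>\<^bsub>AJ\<^esub> \<in> pre I" unfolding pre_def using Q.zero_closed by (simp add: AJ_simps)
  next
    fix a b assume ab: "a \<in> pre I" "b \<in> pre I"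
    then have "fst a \<oplus>\<^bsub>A\<^esub> fst b \<in> I" unfolding pre_def
      using additive_subgroup.a_closed[OF ideal.axioms(1)[OF assms]] by blast
    moreover have "a \<oplus>\<^bsub>AJ\<^esub> b \<in> carrier AJ" using ab unfolding pre_def by blast
    ultimately show "a \<oplus>\<^bsub>AJ\<^esub> b \<in> pre I" unfolding pre_def by (simp add: AJ_simps)
  next
    fix a x assume ax: "a \<in> pre I" "x \<in> carrier AJ"
    have "fst x \<in> carrier A" using AJ_mem_D[OF ax(2)] by blast
    then have "fst x \<otimes>\<^bsub>A\<^esub> fst a \<in> I" using ax(1) unfolding pre_def
      using ideal.I_l_closed[OF assms] by blast
    moreover have "x \<otimes>\<^bsub>AJ\<^esub> a \<in> carrier AJ" using ax unfolding pre_def by blast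
    ultimately show "x \<otimes>\<^bsub>AJ\<^esub> a \<in> pre I" unfolding pre_def by (simp add: AJ_simps)
  qed
qed

lemma m_add: "a \<in> m \<Longrightarrow> b \<in> m \<Longrightarrow> a \<oplus>\<^bsub>A\<^esub> b \<in> m"
  using additive_subgroup.a_closed[OF ideal.axioms(1)[OF maximalideal.axioms(1)[OF mx]]] by blast
lemma m_neg: "a \<in> m \<Longrightarrow> \<ominus>\<^bsub>A\<^esub> a \<in> m"
  using additive_subgroup.a_inv_closed[OF ideal.axioms(1)[OF maximalideal.axioms(1)[OF mx]]] by blast

lemma AJ_units:
  assumes "z \<in> carrier AJ" "fst z \<notin> m" shows "z \<in> Units AJ"
proof -
  interpret Q: cring AJ by (rule AJ_cring)
  obtain a j where z: "z = (a, f a \<oplus>\<^bsub>B\<^esub> j)" "a \<in> carrier A" "j \<in> J" using assms(1) unfolding AJ_carrier by blast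
  obtain c where c: "c \<in> carrier A" "j = f c" using Jf z(3) by blast
  have cm: "c \<in> m" using I0_m c z(3) by blast
  have am: "a \<notin> m" using assms(2) z(1) by simp
  have au: "a \<in> Units A" using nonunit_m z(2) am by blast
  define u where "u = a \<oplus>\<^bsub>A\<^esub> c"
  have uc: "u \<in> carrier A" unfolding u_def using z(2) c(1) by simp
  have "u \<notin> m"
  proof
    assume "u \<in> m"
    then have "u \<oplus>\<^bsub>A\<^esub> \<ominus>\<^bsub>A\<^esub> c \<in> m" using m_add m_neg cm by blast
    moreover have "u \<oplus>\<^bsub>A\<^esub> \<ominus>\<^bsub>A\<^esub> c = a" unfolding u_def using z(2) c(1) by algebra
    ultimately show False using am by simp
  qed
  then have uu: "u \<in> Units A" using nonunit_m uc by blast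
  define v where "v = inv\<^bsub>A\<^esub> u"
  define w where "w = inv\<^bsub>A\<^esub> a"
  have vc: "v \<in> carrier A" unfolding v_def using uu by blast
  have wc: "w \<in> carrier A" unfolding w_def using au by blast
  have vu: "v \<otimes>\<^bsub>A\<^esub> u = \<one>\<^bsub>A\<^esub>" unfolding v_def using uu by simp
  have wa: "w \<otimes>\<^bsub>A\<^esub> a = \<one>\<^bsub>A\<^esub>" unfolding w_def using au by simp
  have key: "v = w \<oplus>\<^bsub>A\<^esub> \<ominus>\<^bsub>A\<^esub> (v \<otimes>\<^bsub>A\<^esub> w \<otimes>\<^bsub>A\<^esub> c)"
  proof -
    have "v = v \<otimes>\<^bsub>A\<^esub> (w \<otimes>\<^bsub>A\<^esub> a)" using wa vc by simp
    also have "\<dots> = w \<otimes>\<^bsub>A\<^esub> (v \<otimes>\<^bsub>A\<^esub> u) \<oplus>\<^bsub>A\<^esub> \<ominus>\<^bsub>A\<^esub> (v \<otimes>\<^bsub>A\<^esub> w \<otimes>\<^bsub>A\<^esub> c)"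
      unfolding u_def using vc wc z(2) c(1) by algebra
    also have "\<dots> = w \<oplus>\<^bsub>A\<^esub> \<ominus>\<^bsub>A\<^esub> (v \<otimes>\<^bsub>A\<^esub> w \<otimes>\<^bsub>A\<^esub> c)" using vu wc by simp
    finally show ?thesis .
  qed
  have "f (\<ominus>\<^bsub>A\<^esub> (v \<otimes>\<^bsub>A\<^esub> w \<otimes>\<^bsub>A\<^esub> c)) = \<ominus>\<^bsub>B\<^esub> (f (v \<otimes>\<^bsub>A\<^esub> w) \<otimes>\<^bsub>B\<^esub> f c)"
    using vc wc c(1) by simp
  moreover have "\<ominus>\<^bsub>B\<^esub> (f (v \<otimes>\<^bsub>A\<^esub> w) \<otimes>\<^bsub>B\<^esub> f c) \<in> J"
    using J_neg J_mult z(3) c(2) vc wc by simp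
  ultimately have jJ: "f (\<ominus>\<^bsub>A\<^esub> (v \<otimes>\<^bsub>A\<^esub> w \<otimes>\<^bsub>A\<^esub> c)) \<in> J" by simp
  have "f v = f w \<oplus>\<^bsub>B\<^esub> f (\<ominus>\<^bsub>A\<^esub> (v \<otimes>\<^bsub>A\<^esub> w \<otimes>\<^bsub>A\<^esub> c))"
    using key vc wc c(1) by (metis hom_add R.a_inv_closed R.m_closed)
  then have im: "(w, f v) \<in> carrier AJ" unfolding mem_AJ using wc jJ by blast
  have zf: "z = (a, f u)" unfolding z(1) u_def using z(2) c by simp
  have "(w, f v) \<otimes>\<^bsub>AJ\<^esub> z = (w \<otimes>\<^bsub>A\<^esub> a, f (v \<otimes>\<^bsub>A\<^esub> u))" unfolding zf using vc uc by (simp add: AJ_simps)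
  also have "\<dots> = \<one>\<^bsub>AJ\<^esub>" using wa vu by (simp add: AJ_simps)
  finally have e1: "(w, f v) \<otimes>\<^bsub>AJ\<^esub> z = \<one>\<^bsub>AJ\<^esub>" .
  then have e2: "z \<otimes>\<^bsub>AJ\<^esub> (w, f v) = \<one>\<^bsub>AJ\<^esub>" using Q.m_comm im assms(1) by metis
  show ?thesis unfolding Units_def using e1 e2 im assms(1) by blast
qed

lemma loc_AJ: "loc_data AJ (pre m)"
  unfolding loc_data_def
proof (intro conjI ballI impI)
  show "cring AJ" by (rule AJ_cring)
  show "ideal (pre m) AJ" by (rule pre_ideal[OF maximalideal.axioms(1)[OF mx]])
  show "\<one>\<^bsub>AJ\<^esub> \<notin> pre m" unfolding pre_def using one_notin_m by (simp add: AJ_simps)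
  fix r assume "r \<in> carrier AJ" "r \<notin> pre m"
  then show "r \<in> Units AJ" using AJ_units unfolding pre_def by blast
qed

lemma proj_ideal:
  assumes "ideal I' AJ" shows "ideal (fst ` I') A"
proof (rule R.ideal_test)
  show "fst ` I' \<subseteq> carrier A" using ideal.Icarr[OF assms] AJ_mem_D by blast
  have "\<zero>\<^bsub>AJ\<^esub> \<in> I'" using additive_subgroup.zero_closed[OF ideal.axioms(1)[OF assms]] .
  then have "(\<zero>\<^bsub>A\<^esub>, \<zero>\<^bsub>B\<^esub>) \<in> I'" by (simp add: AJ_simps)
  then show "\<zero>\<^bsub>A\<^esub> \<in> fst ` I'" by force
next
  fix a b assume "a \<in> fst ` I'" "b \<in> fst ` I'"
  then obtain z1 z2 where z: "z1 \<in> I'" "z2 \<in> I'" "a = fst z1" "b = fst z2" by blast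
  have "z1 \<oplus>\<^bsub>AJ\<^esub> z2 \<in> I'" using additive_subgroup.a_closed[OF ideal.axioms(1)[OF assms] z(1,2)] .
  moreover have "fst (z1 \<oplus>\<^bsub>AJ\<^esub> z2) = a \<oplus>\<^bsub>A\<^esub> b" using z(3,4) by (simp add: AJ_simps)
  ultimately show "a \<oplus>\<^bsub>A\<^esub> b \<in> fst ` I'" by force
next
  fix a x assume ax: "a \<in> fst ` I'" "x \<in> carrier A"
  then obtain z1 where z: "z1 \<in> I'" "a = fst z1" by blast
  have "(x, f x) \<otimes>\<^bsub>AJ\<^esub> z1 \<in> I'" using ideal.I_l_closed[OF assms z(1) diag_mem[OF ax(2)]] .
  moreover have "fst ((x, f x) \<otimes>\<^bsub>AJ\<^esub> z1) = x \<otimes>\<^bsub>A\<^esub> a" using z(2) by (simp add: AJ_simps)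
  ultimately show "x \<otimes>\<^bsub>A\<^esub> a \<in> fst ` I'" by force
qed

lemma gen_proj:
  assumes "S \<subseteq> carrier AJ" shows "fst ` (genideal AJ S) = genideal A (fst ` S)"
proof -
  interpret Q: cring AJ by (rule AJ_cring)
  have fS: "fst ` S \<subseteq> carrier A" using assms AJ_mem_D by blast
  have "S \<subseteq> pre (genideal A (fst ` S))"
    unfolding pre_def using assms R.genideal_self[OF fS] by blast
  then have "genideal AJ S \<subseteq> pre (genideal A (fst ` S))"
    using Q.genideal_minimal[OF pre_ideal[OF R.genideal_ideal[OF fS]]] by blast
  then have "fst ` (genideal AJ S) \<subseteq> genideal A (fst ` S)" unfolding pre_def by blast
  moreover have "genideal A (fst ` S) \<subseteq> fst ` (genideal AJ S)"
  proof (rule R.genideal_minimal[OF proj_ideal[OF Q.genideal_ideal[OF assms]]])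
    show "fst ` S \<subseteq> fst ` (genideal AJ S)" using Q.genideal_self[OF assms] by blast
  qed
  ultimately show ?thesis by blast
qed

lemma diag_gen:
  assumes "S \<subseteq> carrier A" "a \<in> genideal A S"
  shows "(a, f a) \<in> genideal AJ ((\<lambda>x. (x, f x)) ` S)"
proof -
  interpret Q: cring AJ by (rule AJ_cring)
  let ?D = "(\<lambda>x. (x, f x)) ` S"
  have DS: "?D \<subseteq> carrier AJ" using assms(1) diag_mem by blast
  have GI: "ideal (genideal AJ ?D) AJ" using Q.genideal_ideal[OF DS] .
  let ?T = "{x \<in> carrier A. (x, f x) \<in> genideal AJ ?D}"
  have "ideal ?T A"
  proof (rule R.ideal_test)
    show "?T \<subseteq> carrier A" by blast
    have "\<zero>\<^bsub>AJ\<^esub> \<in> genideal AJ ?D" using additive_subgroup.zero_closed[OF ideal.axioms(1)[OF GI]] .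
    then show "\<zero>\<^bsub>A\<^esub> \<in> ?T" by (simp add: AJ_simps)
  next
    fix x y assume xy: "x \<in> ?T" "y \<in> ?T"
    then have "(x, f x) \<oplus>\<^bsub>AJ\<^esub> (y, f y) \<in> genideal AJ ?D"
      using additive_subgroup.a_closed[OF ideal.axioms(1)[OF GI]] by blast
    then show "x \<oplus>\<^bsub>A\<^esub> y \<in> ?T" using xy by (simp add: AJ_simps)
  next
    fix x y assume xy: "x \<in> ?T" "y \<in> carrier A"
    then have "(y, f y) \<otimes>\<^bsub>AJ\<^esub> (x, f x) \<in> genideal AJ ?D"
      using ideal.I_l_closed[OF GI] diag_mem by blast
    then show "y \<otimes>\<^bsub>A\<^esub> x \<in> ?T" using xy by (simp add: AJ_simps)
  qed
  moreover have "S \<subseteq> ?T" using Q.genideal_self[OF DS] assms(1) by blast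
  ultimately have "genideal A S \<subseteq> ?T" using R.genideal_minimal by blast
  then show ?thesis using assms(2) by blast
qed

lemma pidl_proj:
  assumes "g \<in> carrier AJ" shows "fst ` (PIdl\<^bsub>AJ\<^esub> g) = PIdl\<^bsub>A\<^esub> (fst g)"
proof
  show "fst ` (PIdl\<^bsub>AJ\<^esub> g) \<subseteq> PIdl\<^bsub>A\<^esub> (fst g)"
  proof
    fix a assume "a \<in> fst ` (PIdl\<^bsub>AJ\<^esub> g)"
    then obtain x where x: "x \<in> carrier AJ" "a = fst (x \<otimes>\<^bsub>AJ\<^esub> g)" unfolding cgenideal_def by blast
    then have "a = fst x \<otimes>\<^bsub>A\<^esub> fst g" by (simp add: AJ_simps)
    moreover have "fst x \<in> carrier A" using AJ_mem_D[OF x(1)] by blast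
    ultimately show "a \<in> PIdl\<^bsub>A\<^esub> (fst g)" unfolding cgenideal_def by blast
  qed
  show "PIdl\<^bsub>A\<^esub> (fst g) \<subseteq> fst ` (PIdl\<^bsub>AJ\<^esub> g)"
  proof
    fix a assume "a \<in> PIdl\<^bsub>A\<^esub> (fst g)"
    then obtain x where x: "x \<in> carrier A" "a = x \<otimes>\<^bsub>A\<^esub> fst g" unfolding cgenideal_def by blast
    have "(x, f x) \<otimes>\<^bsub>AJ\<^esub> g \<in> PIdl\<^bsub>AJ\<^esub> g" unfolding cgenideal_def using diag_mem[OF x(1)] by blast
    moreover have "fst ((x, f x) \<otimes>\<^bsub>AJ\<^esub> g) = a" using x(2) by (simp add: AJ_simps)
    ultimately show "a \<in> fst ` (PIdl\<^bsub>AJ\<^esub> g)" by force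
  qed
qed

lemma JJ:
  assumes H: "\<forall>a \<in> m - zero_divisors A. J = (\<lambda>j. f a \<otimes>\<^bsub>B\<^esub> j) ` J"
    and b: "b \<in> regular_elems B" and j: "j \<in> J"
  shows "\<exists>j'\<in>J. j = b \<otimes>\<^bsub>B\<^esub> j'"
proof -
  obtain r where r: "r \<in> regular_elems A" "b = f r" using b regf by force
  have rc: "r \<in> carrier A" using r(1) unfolding regular_elems_def by blast
  show ?thesis
  proof (cases "r \<in> m")
    case True
    then have "r \<in> m - zero_divisors A" using r(1) unfolding regular_elems_def by blast
    then have "J = (\<lambda>j. f r \<otimes>\<^bsub>B\<^esub> j) ` J" using H by blast
    then show ?thesis using j r(2) by blast
  next
    case False
    then have ru: "r \<in> Units A" using nonunit_m rc by blast
    have ic: "inv\<^bsub>A\<^esub> r \<in> carrier A" using ru by blast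
    have jc: "j \<in> carrier B" using Jc j .
    have "f (inv\<^bsub>A\<^esub> r) \<otimes>\<^bsub>B\<^esub> j \<in> J" using J_mult j ic by simp
    moreover have "j = b \<otimes>\<^bsub>B\<^esub> (f (inv\<^bsub>A\<^esub> r) \<otimes>\<^bsub>B\<^esub> j)"
    proof -
      have "b \<otimes>\<^bsub>B\<^esub> (f (inv\<^bsub>A\<^esub> r) \<otimes>\<^bsub>B\<^esub> j) = f (r \<otimes>\<^bsub>A\<^esub> inv\<^bsub>A\<^esub> r) \<otimes>\<^bsub>B\<^esub> j"
        unfolding r(2) using rc ic jc by (simp add: S.m_assoc)
      also have "\<dots> = j" using ru jc by simp
      finally show ?thesis by simp
    qed
    ultimately show ?thesis by blast
  qed
qed


lemma freg: "r \<in> regular_elems A \<Longrightarrow> f r \<in> regular_elems B"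
  using regf by blast

lemma reg_carr_A: "r \<in> regular_elems A \<Longrightarrow> r \<in> carrier A"
  unfolding regular_elems_def by blast

lemma dir1_A:
  assumes P: "pruefer_ring AJ" shows "pruefer_ring A"
  unfolding pruefer_ring_def
proof (intro allI impI)
  interpret Q: cring AJ by (rule AJ_cring)
  fix I assume "fin_gen_ideal A I \<and> regular_ideal A I"
  then obtain S r where S: "finite S" "S \<subseteq> carrier A" "I = genideal A S"
     and r: "r \<in> I" "r \<in> regular_elems A"
    unfolding fin_gen_ideal_def regular_ideal_def by blast
  let ?D = "(\<lambda>x. (x, f x)) ` S"
  have DS: "?D \<subseteq> carrier AJ" using S(2) diag_mem by blast
  have GI: "ideal (genideal AJ ?D) AJ" using Q.genideal_ideal[OF DS] .
  have fg: "fin_gen_ideal AJ (genideal AJ ?D)" unfolding fin_gen_ideal_def using GI DS S(1) by blast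
  have rin: "(r, f r) \<in> genideal AJ ?D" using diag_gen[OF S(2)] r(1) S(3) by blast
  have rc: "r \<in> carrier A" using reg_carr_A r(2) .
  have "(r, f r) \<in> regular_elems AJ" using reg_I[OF diag_mem[OF rc] r(2) freg[OF r(2)]] .
  then have "regular_ideal AJ (genideal AJ ?D)" unfolding regular_ideal_def using GI rin by blast
  then have "invertible_ideal AJ (genideal AJ ?D)" using P fg unfolding pruefer_ring_def by blast
  then obtain g where g: "g \<in> regular_elems AJ" "g \<in> genideal AJ ?D" "genideal AJ ?D = PIdl\<^bsub>AJ\<^esub> g"
    using Q.inv_principal[OF loc_AJ] by blast
  have gc: "g \<in> carrier AJ" using g(1) unfolding regular_elems_def by blast
  have "fst ` ?D = S" by force
  then have "I = fst ` genideal AJ ?D" using gen_proj[OF DS] S(3) by simp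
  also have "\<dots> = PIdl\<^bsub>A\<^esub> (fst g)" using g(3) pidl_proj[OF gc] by simp
  finally have IP: "I = PIdl\<^bsub>A\<^esub> (fst g)" .
  have "fst g \<in> regular_elems A" using reg_D[of "fst g" "snd g"] g(1) by simp
  then show "invertible_ideal A I" unfolding IP by (rule R.principal_invertible)
qed

lemma dir1_J:
  assumes P: "pruefer_ring AJ" and a: "a \<in> m - zero_divisors A"
  shows "J = (\<lambda>j. f a \<otimes>\<^bsub>B\<^esub> j) ` J"
proof
  interpret Q: cring AJ by (rule AJ_cring)
  have ac: "a \<in> carrier A" using a m_carr by blast
  have areg: "a \<in> regular_elems A" unfolding regular_elems_def using a ac by blast
  have fac: "f a \<in> carrier B" using ac by simp
  show "(\<lambda>j. f a \<otimes>\<^bsub>B\<^esub> j) ` J \<subseteq> J" using J_mult fac by blast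
  show "J \<subseteq> (\<lambda>j. f a \<otimes>\<^bsub>B\<^esub> j) ` J"
  proof
    fix j assume j: "j \<in> J"
    let ?S = "{(a, f a), (\<zero>\<^bsub>A\<^esub>, j)}"
    have SS: "?S \<subseteq> carrier AJ" using diag_mem[OF ac] zeroJ_mem[OF j] by blast
    have GI: "ideal (genideal AJ ?S) AJ" using Q.genideal_ideal[OF SS] .
    have fg: "fin_gen_ideal AJ (genideal AJ ?S)" unfolding fin_gen_ideal_def using GI SS
      by (metis finite.emptyI finite.insertI)
    have ain: "(a, f a) \<in> genideal AJ ?S" using Q.genideal_self[OF SS] by blast
    have jin: "(\<zero>\<^bsub>A\<^esub>, j) \<in> genideal AJ ?S" using Q.genideal_self[OF SS] by blast
    have areg2: "(a, f a) \<in> regular_elems AJ" using reg_I[OF diag_mem[OF ac] areg freg[OF areg]] .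
    have "regular_ideal AJ (genideal AJ ?S)" unfolding regular_ideal_def using GI ain areg2 by blast
    then have "invertible_ideal AJ (genideal AJ ?S)" using P fg unfolding pruefer_ring_def by blast
    then obtain g where g: "g \<in> regular_elems AJ" "g \<in> genideal AJ ?S" "genideal AJ ?S = PIdl\<^bsub>AJ\<^esub> g"
      using Q.inv_principal[OF loc_AJ] by blast
    obtain s where s: "s \<in> ?S" "PIdl\<^bsub>AJ\<^esub> s = PIdl\<^bsub>AJ\<^esub> g" "s \<in> regular_elems AJ"
      using Q.gen_choice[OF loc_AJ SS g(1) g(3)] by blast
    have "s \<noteq> (\<zero>\<^bsub>A\<^esub>, j)"
    proof
      assume "s = (\<zero>\<^bsub>A\<^esub>, j)"
      then have "\<zero>\<^bsub>A\<^esub> \<in> regular_elems A" using reg_D s(3) by blast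
      moreover have "\<zero>\<^bsub>A\<^esub> \<otimes>\<^bsub>A\<^esub> \<one>\<^bsub>A\<^esub> = \<zero>\<^bsub>A\<^esub>" by simp
      ultimately show False using one_ne_zero_A unfolding R.reg_iff by blast
    qed
    then have sa: "s = (a, f a)" using s(1) by blast
    have "(\<zero>\<^bsub>A\<^esub>, j) \<in> PIdl\<^bsub>AJ\<^esub> (a, f a)" using jin g(3) s(2) sa by simp
    then obtain x where x: "x \<in> carrier AJ" "(\<zero>\<^bsub>A\<^esub>, j) = x \<otimes>\<^bsub>AJ\<^esub> (a, f a)" unfolding cgenideal_def by blast
    have x1: "\<zero>\<^bsub>A\<^esub> = fst x \<otimes>\<^bsub>A\<^esub> a" and x2: "j = snd x \<otimes>\<^bsub>B\<^esub> f a" using x(2) by (simp_all add: AJ_simps)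
    have fxc: "fst x \<in> carrier A" using AJ_mem_D[OF x(1)] by blast
    have "a \<otimes>\<^bsub>A\<^esub> fst x = \<zero>\<^bsub>A\<^esub>" using x1 fxc ac R.m_comm by metis
    then have fx0: "fst x = \<zero>\<^bsub>A\<^esub>" using areg fxc unfolding R.reg_iff by blast
    obtain j' where j': "j' \<in> J" "snd x = f (fst x) \<oplus>\<^bsub>B\<^esub> j'"
      using x(1) mem_AJ[of "fst x" "snd x"] by auto
    have "snd x = j'" using j'(2) fx0 Jc[OF j'(1)] by simp
    then have "j = f a \<otimes>\<^bsub>B\<^esub> j'" using x2 fac Jc[OF j'(1)] S.m_comm by metis
    then show "j \<in> (\<lambda>j. f a \<otimes>\<^bsub>B\<^esub> j) ` J" using j'(1) by blast
  qed
qed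

lemma dir2:
  assumes P: "pruefer_ring A" and H: "\<forall>a \<in> m - zero_divisors A. J = (\<lambda>j. f a \<otimes>\<^bsub>B\<^esub> j) ` J"
  shows "pruefer_ring AJ"
  unfolding pruefer_ring_def
proof (intro allI impI)
  interpret Q: cring AJ by (rule AJ_cring)
  fix I' assume "fin_gen_ideal AJ I' \<and> regular_ideal AJ I'"
  then obtain S z where S: "finite S" "S \<subseteq> carrier AJ" "I' = genideal AJ S"
     and I': "ideal I' AJ" and z: "z \<in> I'" "z \<in> regular_elems AJ"
    unfolding fin_gen_ideal_def regular_ideal_def by blast
  obtain x y where xy: "z = (x, y)" by (cases z)
  have xr: "x \<in> regular_elems A" and yr: "y \<in> regular_elems B" using reg_D z(2) xy by blast+
  have fS: "fst ` S \<subseteq> carrier A" using S(2) AJ_mem_D by blast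
  have Ieq: "fst ` I' = genideal A (fst ` S)" using gen_proj[OF S(2)] S(3) by simp
  have GIA: "ideal (fst ` I') A" using proj_ideal[OF I'] .
  have "fin_gen_ideal A (fst ` I')" unfolding fin_gen_ideal_def using GIA Ieq fS S(1) by blast
  moreover have "x \<in> fst ` I'" using z(1) xy by force
  then have "regular_ideal A (fst ` I')" unfolding regular_ideal_def using GIA xr by blast
  ultimately have "invertible_ideal A (fst ` I')" using P unfolding pruefer_ring_def by blast
  then obtain u where u: "u \<in> regular_elems A" "u \<in> fst ` I'" "fst ` I' = PIdl\<^bsub>A\<^esub> u"
    using R.inv_principal[OF loc_A] by blast
  obtain ak where ak: "ak \<in> fst ` S" "PIdl\<^bsub>A\<^esub> ak = PIdl\<^bsub>A\<^esub> u" "ak \<in> regular_elems A"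
    using R.gen_choice[OF loc_A fS u(1)] Ieq u(3) by metis
  have akc: "ak \<in> carrier A" using reg_carr_A ak(3) .
  have "S \<subseteq> I'" using Q.genideal_self[OF S(2)] S(3) by simp
  then have "ak \<in> fst ` I'" using ak(1) by blast
  then obtain b where b: "(ak, b) \<in> I'" by force
  have "(ak, b) \<in> carrier AJ" using ideal.Icarr[OF I' b] .
  then obtain j where j: "j \<in> J" "b = f ak \<oplus>\<^bsub>B\<^esub> j" unfolding mem_AJ by blast
  have jc: "j \<in> carrier B" using Jc j(1) .
  obtain j2 where j2: "j2 \<in> J" "\<ominus>\<^bsub>B\<^esub> j = y \<otimes>\<^bsub>B\<^esub> j2" using JJ[OF H yr J_neg[OF j(1)]] by blast
  have yc: "y \<in> carrier B" using yr unfolding regular_elems_def by blast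
  have "(\<zero>\<^bsub>A\<^esub>, j2) \<otimes>\<^bsub>AJ\<^esub> z \<in> I'" using ideal.I_l_closed[OF I' z(1) zeroJ_mem[OF j2(1)]] .
  moreover have "(\<zero>\<^bsub>A\<^esub>, j2) \<otimes>\<^bsub>AJ\<^esub> z = (\<zero>\<^bsub>A\<^esub>, \<ominus>\<^bsub>B\<^esub> j)"
    using xy j2(2) reg_carr_A[OF xr] yc Jc[OF j2(1)] S.m_comm by (simp add: AJ_simps)
  ultimately have nj: "(\<zero>\<^bsub>A\<^esub>, \<ominus>\<^bsub>B\<^esub> j) \<in> I'" by simp
  have "(ak, b) \<oplus>\<^bsub>AJ\<^esub> (\<zero>\<^bsub>A\<^esub>, \<ominus>\<^bsub>B\<^esub> j) \<in> I'"
    using additive_subgroup.a_closed[OF ideal.axioms(1)[OF I'] b nj] .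
  moreover have "(ak, b) \<oplus>\<^bsub>AJ\<^esub> (\<zero>\<^bsub>A\<^esub>, \<ominus>\<^bsub>B\<^esub> j) = (ak, f ak)"
  proof -
    have "b \<oplus>\<^bsub>B\<^esub> \<ominus>\<^bsub>B\<^esub> j = f ak" unfolding j(2) using hom_closed[OF akc] jc by algebra
    then show ?thesis using akc by (simp add: AJ_simps)
  qed
  ultimately have gin: "(ak, f ak) \<in> I'" by simp
  have greg: "(ak, f ak) \<in> regular_elems AJ" using reg_I[OF diag_mem[OF akc] ak(3) freg[OF ak(3)]] .
  have "I' = PIdl\<^bsub>AJ\<^esub> (ak, f ak)"
  proof
    show "PIdl\<^bsub>AJ\<^esub> (ak, f ak) \<subseteq> I'"
    proof
      fix p assume "p \<in> PIdl\<^bsub>AJ\<^esub> (ak, f ak)"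
      then obtain w where w: "w \<in> carrier AJ" "p = w \<otimes>\<^bsub>AJ\<^esub> (ak, f ak)" unfolding cgenideal_def by blast
      show "p \<in> I'" unfolding w(2) using ideal.I_l_closed[OF I' gin w(1)] .
    qed
    show "I' \<subseteq> PIdl\<^bsub>AJ\<^esub> (ak, f ak)"
    proof
      fix p assume p: "p \<in> I'"
      obtain a' b' where ab: "p = (a', b')" by (cases p)
      have "(a', b') \<in> carrier AJ" using ideal.Icarr[OF I' p] ab by simp
      then obtain j4 where a'c: "a' \<in> carrier A" and j4: "j4 \<in> J" "b' = f a' \<oplus>\<^bsub>B\<^esub> j4" unfolding mem_AJ by blast
      have "a' \<in> fst ` I'" using p ab by force
      then have "a' \<in> PIdl\<^bsub>A\<^esub> ak" using u(3) ak(2) by simp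
      then obtain t where t: "t \<in> carrier A" "a' = t \<otimes>\<^bsub>A\<^esub> ak" unfolding cgenideal_def by blast
      obtain j3 where j3: "j3 \<in> J" "j4 = f ak \<otimes>\<^bsub>B\<^esub> j3" using JJ[OF H freg[OF ak(3)] j4(1)] by blast
      have j3c: "j3 \<in> carrier B" using Jc j3(1) .
      have wm: "(t, f t \<oplus>\<^bsub>B\<^esub> j3) \<in> carrier AJ" unfolding mem_AJ using t(1) j3(1) by blast
      have "(f t \<oplus>\<^bsub>B\<^esub> j3) \<otimes>\<^bsub>B\<^esub> f ak = f t \<otimes>\<^bsub>B\<^esub> f ak \<oplus>\<^bsub>B\<^esub> f ak \<otimes>\<^bsub>B\<^esub> j3"
        using hom_closed[OF t(1)] hom_closed[OF akc] j3c by algebra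
      also have "\<dots> = b'" using j4(2) j3(2) t akc by simp
      finally have "(t, f t \<oplus>\<^bsub>B\<^esub> j3) \<otimes>\<^bsub>AJ\<^esub> (ak, f ak) = p" using ab t(2) by (simp add: AJ_simps)
      then show "p \<in> PIdl\<^bsub>AJ\<^esub> (ak, f ak)" unfolding cgenideal_def using wm by blast
    qed
  qed
  then show "invertible_ideal AJ I'" using Q.principal_invertible[OF greg] by simp
qed

end

theorem theorem2p2:
  fixes A :: "('a, 'c) ring_scheme" and B :: "('b, 'd) ring_scheme"
    and f :: "'a \<Rightarrow> 'b" and J :: "'b set" and m :: "'a set"
  assumes "local_ring A" and "maximalideal m A"
    and "cring B"
    and "f \<in> ring_hom A B"
    and "ideal J B" and "J \<noteq> carrier B"
    and "J \<subseteq> jacobson_rad B"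
    and "J \<subseteq> f ` carrier A"
    and "f ` regular_elems A = regular_elems B"
  shows "pruefer_ring (amalg A B f J) \<longleftrightarrow>
           pruefer_ring A \<and>
           (\<forall>a \<in> m - zero_divisors A. J = (\<lambda>j. f a \<otimes>\<^bsub>B\<^esub> j) ` J)"
proof -
  have cA: "cring A" using assms(1) unfolding local_ring_def by blast
  have "amal A B f J m"
    unfolding amal_def amal_axioms_def ring_hom_cring_def ring_hom_cring_axioms_def
    using assms cA by blast
  then interpret amal A B f J m .
  show ?thesis using dir1_A dir1_J dir2 by blast
qed

end
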